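(* Let $\varphi:MU^*\otimes_{\mathbb{Z}}\mathbb{Q}\to\mathbb{C}$ be any complex-valued genus, with logarithm $\log_\varphi$ and characteristic power series $Q_\varphi(z)=z/\log_\varphi^{-1}(z)$. Then $\varphi$ has a unique representation as an element of the non-commutative probability space $(\tilde{\mathcal E}_1,\tilde\tau_1)$, given by the canonical operator $$A_\varphi=(1+l)\,\frac{1}{Q_\varphi}(l^* )=(1+l)\Big(\frac{\log_\varphi^{-1}(z)}{z}\Big)(l^* );$$ that is, $A_\varphi\in\tilde{\mathcal E}_1$, $\tilde\tau_1(A_\varphi)\neq0$, the $S$-transform of the $\tilde\tau_1$-distribution of $A_\varphi$ equals $Q_\varphi$, and distinct genera give distinct operators $A_\varphi$ (and distinct distributions).
   Context: $MU^*$ is the complex cobordism ring. A complex-valued genus is a ring homomorphism $\varphi:MU^*\otimes_{\mathbb{Z}}\mathbb{Q}\to\mathbb{C}$ with $\varphi(1)=1$. Its logarithm is $\log_\varphi(z)=\sum_{n\ge1}\frac{\varphi(\mathbb{C}P^{n-1})}{n}z^n$ (with $\mathbb{C}P^0:=1$), a power series $z+O(z^2)$, and $\log_\varphi^{-1}$ is its compositional inverse; $Q_\varphi\in1+z\mathbb{C}[[z]]$. Let $l,l^*$ be symbols with $l^*l=1$. $\tilde{\mathcal E}_1$ is the unital algebra of formal series $\sum_{m,n\ge0}\alpha_{mn}l^m(l^* )^n$ with $\alpha_{mn}\in\mathbb{C}$ and $\alpha_{mn}=0$ for almost all $m$, multiplied using $l^*l=1$; $\tilde\tau_1$ is the linear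 functional sending such a series to $\alpha_{00}$. For $f=\sum f_nz^n\in\mathbb{C}[[z]]$, $f(l^* )=\sum f_n(l^* )^n$. The $\tilde\tau_1$-distribution of $a\in\tilde{\mathcal E}_1$ is $\mu_a:\mathbb{C}[X]\to\mathbb{C}$, $\mu_a(X^k)=\tilde\tau_1(a^k)$. For a distribution $\mu$ with $\mu(X)\ne0$, with $M_\mu(z)=\sum_{n\ge1}\mu(X^n)z^n$, the $S$-transform is $S_\mu(z)=\frac{1+z}{z}M_\mu^{-1}(z)$ ($M_\mu^{-1}$ the compositional inverse). *)

theory Defs
  imports "HOL-Analysis.Analysis" "HOL-Computational_Algebra.Formal_Power_Series"
begin

text \<open>A complex genus phi on MU^* (x) Q is encoded by its values on the generators
  CP^n:  g n = phi(CP^n), with CP^0 = 1, so g 0 = 1.  Since MU^* (x) Q is the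
  polynomial algebra Q[CP^1, CP^2, ...], genera correspond bijectively to such
  sequences.\<close>

definition is_genus :: "(nat \<Rightarrow> complex) \<Rightarrow> bool" where
  "is_genus g \<longleftrightarrow> g 0 = 1"

definition genus_log :: "(nat \<Rightarrow> complex) \<Rightarrow> complex fps" where
  "genus_log g = Abs_fps (\<lambda>n. if n = 0 then 0 else g (n - 1) / of_nat n)"

definition genus_Q :: "(nat \<Rightarrow> complex) \<Rightarrow> complex fps" where
  "genus_Q g = fps_X / fps_inv (genus_log g)"

text \<open>An element sum alpha_{mn} l^m (l^* )^n is its coefficient function alpha.\<close>
type_synonym elt = "nat \<Rightarrow> nat \<Rightarrow> complex"

definition E1 :: "elt set" where
  "E1 = {a. finite {m. \<exists>n. a m n \<noteq> 0}}"

text \<open>Product of monomials using l^* l = 1: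
  (l^m l^{*n})(l^p l^{*q}) = l^m l^{*(n-p+q)} if p <= n, else l^{m+p-n} l^{*q}.\<close>
definition mono_mult :: "nat \<Rightarrow> nat \<Rightarrow> nat \<Rightarrow> nat \<Rightarrow> nat \<times> nat" where
  "mono_mult m n p q = (if p \<le> n then (m, n - p + q) else (m + p - n, q))"

definition E_mult :: "elt \<Rightarrow> elt \<Rightarrow> elt" where
  "E_mult a b = (\<lambda>i j. \<Sum>\<^sub>\<infinity>(m, n, p, q) \<in> {(m, n, p, q). mono_mult m n p q = (i, j)}.
      a m n * b p q)"

definition E_add :: "elt \<Rightarrow> elt \<Rightarrow> elt" where
  "E_add a b = (\<lambda>i j. a i j + b i j)"

definition E_one :: elt where
  "E_one = (\<lambda>i j. if i = 0 \<and> j = 0 then 1 else 0)"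

definition E_l :: elt where
  "E_l = (\<lambda>i j. if i = 1 \<and> j = 0 then 1 else 0)"

definition E_of_fps_lstar :: "complex fps \<Rightarrow> elt" where
  "E_of_fps_lstar f = (\<lambda>i j. if i = 0 then fps_nth f j else 0)"

primrec E_pow :: "elt \<Rightarrow> nat \<Rightarrow> elt" where
  "E_pow a 0 = E_one"
| "E_pow a (Suc k) = E_mult a (E_pow a k)"

definition E_tau :: "elt \<Rightarrow> complex" where
  "E_tau a = a 0 0"

text \<open>The tau-distribution mu_a : C[X] -> C is a linear functional, hence determined
  by (and here represented by) its moment sequence k |-> mu_a(X^k) = tau(a^k).\<close>
definition tau_distr :: "elt \<Rightarrow> nat \<Rightarrow> complex" where
  "tau_distr a k = E_tau (E_pow a k)"

definition moment_series :: "(nat \<Rightarrow> complex) \<Rightarrow> complex fps" where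
  "moment_series \<mu> = Abs_fps (\<lambda>n. if n = 0 then 0 else \<mu> n)"

definition S_transform :: "(nat \<Rightarrow> complex) \<Rightarrow> complex fps" where
  "S_transform \<mu> = (1 + fps_X) * (fps_inv (moment_series \<mu>) / fps_X)"

definition A_op :: "(nat \<Rightarrow> complex) \<Rightarrow> elt" where
  "A_op g = E_mult (E_add E_one E_l) (E_of_fps_lstar (inverse (genus_Q g)))"

end

theory Submission
  imports Defs
begin
unbundle no vec_syntax
unbundle fps_syntax


definition tau :: "nat \<Rightarrow> nat \<Rightarrow> complex" where
  "tau i b = (if b = i \<or> b = i + 1 then 1 else 0)"

definition psi :: "complex fps \<Rightarrow> complex fps" where
  "psi v = fps_X * inverse ((1 + fps_X) * v)"

definition CC :: "(nat \<Rightarrow> nat \<Rightarrow> complex) \<Rightarrow> complex fps \<Rightarrow> nat \<Rightarrow> nat \<Rightarrow> complex fps" where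
  "CC w v N i = (\<Sum>k\<le>N. fps_const (w k i) * (psi v)^k)"

lemma psi0: "psi v $ 0 = 0"
  by (simp add: psi_def)

lemma psi_mult: assumes "v $ 0 = 1" shows "psi v * ((1 + fps_X) * v) = fps_X"
proof -
  have "((1 + fps_X) * v) $ 0 \<noteq> 0" using assms by simp
  then have "inverse ((1 + fps_X) * v) * ((1 + fps_X) * v) = 1" by (rule inverse_mult_eq_1)
  then show ?thesis by (simp add: psi_def mult.assoc)
qed

lemma delta_sum:
  assumes "c \<le> N"
  shows "(\<Sum>n\<le>N. v $ n * (if c = n + j then 1 else 0)) = (if j \<le> c then v $ (c - j) else (0::complex))"
proof (cases "j \<le> c")
  case True
  have "(\<Sum>n\<le>N. v $ n * (if c = n + j then 1 else 0)) = (\<Sum>n\<le>N. if n = c - j then v $ n else 0)"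
    by (rule sum.cong) (use True in auto)
  also have "\<dots> = v $ (c - j)" using True assms by (simp add: sum.delta)
  finally show ?thesis using True by simp
next
  case False
  then show ?thesis by (auto intro: sum.neutral)
qed

lemma Xlem:
  assumes "c \<le> N"
  shows "(fps_X ^ j * ((1 + fps_X) * v)) $ c = (\<Sum>n\<le>N. v $ n * tau (n + j) c)"
proof -
  have e: "fps_X ^ j * ((1 + fps_X) * v) = fps_X ^ j * v + fps_X ^ (j+1) * v"
    by (simp add: algebra_simps)
  have t: "\<And>n. v $ n * tau (n + j) c = v $ n * (if c = n + j then 1 else 0) + v $ n * (if c = n + (j+1) then 1 else 0)"
    by (auto simp: tau_def)
  show ?thesis
    unfolding e t sum.distrib fps_add_nth fps_X_power_mult_nth
    using delta_sum[OF assms, of v j] delta_sum[OF assms, of v "j+1"]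
    by (auto simp: not_less)
qed

lemma CC_main:
  fixes w :: "nat \<Rightarrow> nat \<Rightarrow> complex"
  assumes v0: "v $ 0 = 1"
    and w0: "\<And>i. w 0 i = (if i = 0 then 1 else 0)"
    and wrec: "\<And>k i K. k \<le> K \<Longrightarrow> w (Suc k) i =
        (\<Sum>n\<le>K. v $ n * (w k (n + i) + (if 1 \<le> i then w k (n + i - 1) else 0)))"
  shows "b \<le> N \<Longrightarrow> CC w v N i $ b = tau i b"
proof (induction N arbitrary: i b)
  case 0
  then show ?case by (simp add: CC_def w0 tau_def)
next
  case (Suc N)
  define p where "p = psi v"
  define D where "D = (\<Sum>k\<le>N. fps_const (w (Suc k) i) * p ^ k)"
  define E where "E = (fps_X ^ i + (if 1 \<le> i then fps_X ^ (i - 1) else 0)) * ((1 + fps_X) * v)"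
  have CCs: "CC w v (Suc N) i = fps_const (w 0 i) + p * D"
    unfolding CC_def D_def p_def sum.atMost_Suc_shift
    by (simp add: sum_distrib_left mult_ac)
  have DE: "D $ c = E $ c" if c: "c \<le> N" for c
  proof -
    have "D $ c = (\<Sum>k\<le>N. w (Suc k) i * (p ^ k) $ c)"
      by (simp add: D_def fps_sum_nth)
    also have "\<dots> = (\<Sum>k\<le>N. (\<Sum>n\<le>N. v $ n * (w k (n + i) + (if 1 \<le> i then w k (n + i - 1) else 0))) * (p ^ k) $ c)"
      by (rule sum.cong) (auto simp: wrec)
    also have "\<dots> = (\<Sum>k\<le>N. \<Sum>n\<le>N. v $ n * ((w k (n + i) + (if 1 \<le> i then w k (n + i - 1) else 0)) * (p ^ k) $ c))"
      by (simp only: sum_distrib_right mult.assoc)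
    also have "\<dots> = (\<Sum>n\<le>N. \<Sum>k\<le>N. v $ n * ((w k (n + i) + (if 1 \<le> i then w k (n + i - 1) else 0)) * (p ^ k) $ c))"
      by (rule sum.swap)
    also have "\<dots> = (\<Sum>n\<le>N. v $ n * (\<Sum>k\<le>N. (w k (n + i) + (if 1 \<le> i then w k (n + i - 1) else 0)) * (p ^ k) $ c))"
      by (simp only: sum_distrib_left)
    also have "\<dots> = (\<Sum>n\<le>N. v $ n * (CC w v N (n + i) $ c + (if 1 \<le> i then CC w v N (n + i - 1) $ c else 0)))"
    proof (rule sum.cong[OF refl])
      fix n
      have cc: "\<And>j. CC w v N j $ c = (\<Sum>k\<le>N. w k j * (p ^ k) $ c)"
        by (simp add: CC_def fps_sum_nth p_def)
      show "v $ n * (\<Sum>k\<le>N. (w k (n + i) + (if 1 \<le> i then w k (n + i - 1) else 0)) * (p ^ k) $ c) =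
            v $ n * (CC w v N (n + i) $ c + (if 1 \<le> i then CC w v N (n + i - 1) $ c else 0))"
        unfolding cc by (cases "1 \<le> i") (simp_all add: distrib_right sum.distrib)
    qed
    also have "\<dots> = (\<Sum>n\<le>N. v $ n * (tau (n + i) c + (if 1 \<le> i then tau (n + i - 1) c else 0)))"
      using Suc.IH c by (intro sum.cong) auto
    also have "\<dots> = E $ c"
    proof (cases "1 \<le> i")
      case True
      have e1: "\<And>n. n + i - 1 = n + (i - 1)" using True by simp
      have "E $ c = (fps_X ^ i * ((1 + fps_X) * v)) $ c + (fps_X ^ (i - 1) * ((1 + fps_X) * v)) $ c"
        using True unfolding E_def by (simp add: distrib_right)
      also have "\<dots> = (\<Sum>n\<le>N. v $ n * tau (n + i) c) + (\<Sum>n\<le>N. v $ n * tau (n + (i - 1)) c)"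
        by (simp only: Xlem[OF c])
      finally show ?thesis using True by (simp add: e1 sum.distrib distrib_left)
    next
      case False
      then show ?thesis unfolding E_def using Xlem[OF c, of i v] by simp
    qed
    finally show ?thesis .
  qed
  have pE: "p * E = (fps_X ^ i + (if 1 \<le> i then fps_X ^ (i - 1) else 0)) * fps_X"
    unfolding E_def p_def using psi_mult[OF v0] by (metis mult.left_commute)
  have "(p * D) $ b = (p * E) $ b"
    unfolding fps_mult_nth
  proof (rule sum.cong)
    fix a assume "a \<in> {0..b}"
    then show "p $ a * D $ (b - a) = p $ a * E $ (b - a)"
      using Suc.prems DE[of "b - a"] psi0[of v] by (cases "a = 0") (auto simp: p_def)
  qed simp
  then show ?case
    unfolding CCs pE
    by (auto simp: tau_def w0 fps_X_power_mult_right_nth distrib_right)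
qed



lemma mono_iff: "mono_mult m n p q = (i, 0) \<longleftrightarrow> m \<le> i \<and> p = n + i - m \<and> q = 0"
  unfolding mono_mult_def by auto

lemma BU: "E_mult (E_add E_one E_l) (E_of_fps_lstar v) = (\<lambda>i j. if i \<le> 1 then v $ j else 0)"
proof (intro ext)
  fix i j
  let ?f = "\<lambda>(m, n, p, q). E_add E_one E_l m n * E_of_fps_lstar v p q"
  let ?S = "{(m, n, p, q). mono_mult m n p q = (i, j)}"
  let ?T = "(if i \<le> 1 then {(i, 0::nat, 0::nat, j)} else {})"
  have "infsum ?f ?S = infsum ?f ?T"
  proof (rule infsum_cong_neutral)
    fix x assume "x \<in> ?T - ?S" then show "?f x = 0" by (auto split: if_splits simp: mono_mult_def)
  next
    fix x assume "x \<in> ?S - ?T" then show "?f x = 0"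
      by (cases x) (auto simp: E_add_def E_one_def E_l_def E_of_fps_lstar_def mono_mult_def split: if_splits)
  qed simp
  also have "\<dots> = (if i \<le> 1 then v $ j else 0)"
    by (auto simp: E_add_def E_one_def E_l_def E_of_fps_lstar_def)
  finally show "E_mult (E_add E_one E_l) (E_of_fps_lstar v) i j = (if i \<le> 1 then v $ j else 0)"
    unfolding E_mult_def .
qed

lemma col:
  assumes yK: "\<And>p. p > K \<Longrightarrow> y p 0 = 0"
  shows "E_mult (\<lambda>m n. if m \<le> 1 then v $ n else 0) y i 0 =
     (\<Sum>n\<le>K. v $ n * (y (n + i) 0 + (if 1 \<le> i then y (n + i - 1) 0 else 0)))"
proof -
  define a where "a = (\<lambda>m n. if m \<le> (1::nat) then v $ n else 0)"
  let ?f = "\<lambda>(m, n, p, q). a m n * y p q"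
  let ?S = "{(m, n, p, q). mono_mult m n p q = (i, 0)}"
  define T0 where "T0 = (\<lambda>n. (0::nat, n, n + i, 0::nat)) ` {..K}"
  define T1 where "T1 = (if 1 \<le> i then (\<lambda>n. (1::nat, n, n + i - 1, 0::nat)) ` {..K} else {})"
  have "infsum ?f ?S = infsum ?f (T0 \<union> T1)"
  proof (rule infsum_cong_neutral)
    fix x assume "x \<in> (T0 \<union> T1) - ?S" then show "?f x = 0"
      by (auto simp: T0_def T1_def mono_iff split: if_splits)
  next
    fix x assume x: "x \<in> ?S - (T0 \<union> T1)"
    obtain m n p q where xe: "x = (m, n, p, q)" by (cases x) auto
    show "?f x = 0"
    proof (rule ccontr)
      assume nz: "?f x \<noteq> 0"
      then have m1: "m \<le> 1" and yp: "y p q \<noteq> 0" by (auto simp: xe a_def split: if_splits)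
      from x have mi: "m \<le> i" and pe: "p = n + i - m" and q0: "q = 0" by (auto simp: xe mono_iff)
      have "p \<le> K" using yK yp q0 by (metis not_less)
      then have nK: "n \<le> K" using pe mi by simp
      show False
      proof (cases "m = 0")
        case True
        then have "x \<in> T0" using xe pe q0 nK by (auto simp: T0_def)
        then show False using x by auto
      next
        case False
        then have "m = 1" using m1 by simp
        then have "x \<in> T1" using xe pe q0 nK mi by (auto simp: T1_def)
        then show False using x by auto
      qed
    qed
  qed simp
  also have "\<dots> = sum ?f (T0 \<union> T1)"
    by (rule infsum_finite) (simp add: T0_def T1_def)
  also have "\<dots> = sum ?f T0 + sum ?f T1"
    by (rule sum.union_disjoint) (auto simp: T0_def T1_def)
  also have "sum ?f T0 = (\<Sum>n\<le>K. v $ n * y (n + i) 0)"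
    unfolding T0_def by (subst sum.reindex) (auto simp: inj_on_def a_def)
  also have "sum ?f T1 = (\<Sum>n\<le>K. v $ n * (if 1 \<le> i then y (n + i - 1) 0 else 0))"
    unfolding T1_def by (cases "1 \<le> i") (auto simp: sum.reindex inj_on_def a_def)
  finally show ?thesis
    unfolding E_mult_def a_def by (simp add: sum.distrib distrib_left)
qed



definition vv :: "(nat \<Rightarrow> complex) \<Rightarrow> complex fps" where
  "vv g = fps_shift 1 (fps_inv (genus_log g))"

lemma log01: assumes "is_genus g" shows "genus_log g $ 0 = 0" "genus_log g $ 1 = 1"
  using assms by (auto simp: genus_log_def is_genus_def)

lemma inv01: assumes "is_genus g" shows "fps_inv (genus_log g) $ 0 = 0" "fps_inv (genus_log g) $ 1 = 1"
  using log01[OF assms] by (auto simp: fps_inv_def)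

lemma vv0: assumes "is_genus g" shows "vv g $ 0 = 1"
  using inv01[OF assms] by (simp add: vv_def)

lemma inv_eq: assumes "is_genus g" shows "fps_inv (genus_log g) = fps_X * vv g"
proof (rule fps_ext)
  fix n show "fps_inv (genus_log g) $ n = (fps_X * vv g) $ n"
    using fps_X_power_mult_nth[of 1 "vv g" n] inv01[OF assms]
    by (cases n) (auto simp: vv_def)
qed

lemma Q_eq: assumes "is_genus g" shows "genus_Q g = inverse (vv g)"
proof -
  have X0: "(fps_X :: complex fps) \<noteq> 0" by simp
  have "genus_Q g = (fps_X * 1) / (fps_X * vv g)"
    by (simp add: genus_Q_def inv_eq[OF assms])
  also have "\<dots> = 1 / vv g" by (rule div_mult_mult1[OF X0])
  also have "\<dots> = inverse (vv g)" using vv0[OF assms] by (simp add: fps_divide_unit)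
  finally show ?thesis .
qed

lemma A_eq: assumes "is_genus g" shows "A_op g = (\<lambda>i j. if i \<le> 1 then vv g $ j else 0)"
proof -
  have "inverse (genus_Q g) = vv g" using Q_eq[OF assms] vv0[OF assms] by simp
  then show ?thesis by (simp add: A_op_def BU)
qed

lemma w_facts:
  fixes v :: "complex fps"
  defines "A \<equiv> (\<lambda>i j. if i \<le> (1::nat) then v $ j else 0)"
  shows w0: "E_pow A 0 i 0 = (if i = 0 then 1 else 0)"
    and wz: "p > k \<Longrightarrow> E_pow A k p 0 = 0"
    and wrec: "k \<le> K \<Longrightarrow> E_pow A (Suc k) i 0 =
        (\<Sum>n\<le>K. v $ n * (E_pow A k (n + i) 0 + (if 1 \<le> i then E_pow A k (n + i - 1) 0 else 0)))"
proof -
  have colA: "\<And>K y i. (\<And>p. p > K \<Longrightarrow> y p 0 = 0) \<Longrightarrow> E_mult A y i 0 =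
     (\<Sum>n\<le>K. v $ n * (y (n + i) 0 + (if 1 \<le> i then y (n + i - 1) 0 else 0)))"
    unfolding A_def by (rule col)
  show "E_pow A 0 i 0 = (if i = 0 then 1 else 0)" by (simp add: E_one_def)
  have z: "\<And>p. p > k \<Longrightarrow> E_pow A k p 0 = 0" for k
  proof (induction k)
    case 0 then show ?case by (simp add: E_one_def)
  next
    case (Suc k)
    have "E_pow A (Suc k) p 0 = (\<Sum>n\<le>k. v $ n * (E_pow A k (n + p) 0 + (if 1 \<le> p then E_pow A k (n + p - 1) 0 else 0)))"
      unfolding E_pow.simps by (rule colA) (use Suc.IH in auto)
    also have "\<dots> = 0" using Suc.prems by (intro sum.neutral) (auto simp: Suc.IH)
    finally show ?case .
  qed
  then show "p > k \<Longrightarrow> E_pow A k p 0 = 0" .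
  show "k \<le> K \<Longrightarrow> E_pow A (Suc k) i 0 =
        (\<Sum>n\<le>K. v $ n * (E_pow A k (n + i) 0 + (if 1 \<le> i then E_pow A k (n + i - 1) 0 else 0)))"
    unfolding E_pow.simps by (intro colA) (use z in auto)
qed

lemma main_fps:
  assumes "is_genus g"
  shows "fps_inv (moment_series (tau_distr (A_op g))) = psi (vv g)"
proof -
  define v where "v = vv g"
  define A where "A = (\<lambda>i j. if i \<le> (1::nat) then v $ j else 0)"
  have AA: "A_op g = A" unfolding A_def v_def by (rule A_eq[OF assms])
  define w where "w = (\<lambda>k i. E_pow A k i 0)"
  have v0: "v $ 0 = 1" using vv0[OF assms] by (simp add: v_def)
  have CCm: "\<And>b N i. b \<le> N \<Longrightarrow> CC w v N i $ b = tau i b"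
  proof -
    have h1: "\<And>i. w 0 i = (if i = 0 then 1 else 0)" unfolding w_def A_def by (rule w0)
    have h2: "\<And>k i K. k \<le> K \<Longrightarrow> w (Suc k) i =
        (\<Sum>n\<le>K. v $ n * (w k (n + i) + (if 1 \<le> i then w k (n + i - 1) else 0)))"
      unfolding w_def A_def by (rule wrec)
    fix b N i :: nat assume "b \<le> N" then show "CC w v N i $ b = tau i b" using CC_main[OF v0 h1 h2] by blast
  qed
  define M where "M = moment_series (tau_distr (A_op g))"
  have Mn: "M $ n = w n 0 - (if n = 0 then 1 else 0)" for n
    by (simp add: M_def moment_series_def tau_distr_def E_tau_def AA w_def E_one_def)
  have M0: "M $ 0 = 0" by (simp add: Mn w_def E_one_def)
  have w10: "w 1 0 = 1"
    using wrec[of 0 0 v 0] v0 by (simp add: w_def A_def E_one_def)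
  have M1: "M $ 1 \<noteq> 0" using w10 by (simp add: Mn)
  let ?p = "psi v"
  have MP: "M oo ?p = fps_X"
  proof (rule fps_ext)
    fix n
    have "(M oo ?p) $ n = (\<Sum>i=0..n. (w i 0 - (if i = 0 then 1 else 0)) * (?p ^ i) $ n)"
      by (simp add: fps_compose_nth Mn)
    also have "\<dots> = (\<Sum>i=0..n. w i 0 * (?p ^ i) $ n) - (\<Sum>i=0..n. (if i = 0 then 1 else 0) * (?p ^ i) $ n)"
      by (simp add: algebra_simps sum_subtractf)
    also have "(\<Sum>i=0..n. (if i = 0 then 1 else 0) * (?p ^ i) $ n) = (if n = 0 then 1 else 0)"
      by (simp add: if_distrib[of "\<lambda>x. x * _"] cong: if_cong)
    also have "(\<Sum>i=0..n. w i 0 * (?p ^ i) $ n) = CC w v n 0 $ n"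
      by (simp add: CC_def fps_sum_nth atLeast0AtMost)
    also have "\<dots> = tau 0 n" by (rule CCm) simp
    finally show "(M oo ?p) $ n = fps_X $ n" by (auto simp: tau_def)
  qed
  have "fps_inv M = fps_inv M oo (M oo ?p)" by (simp add: MP)
  also have "\<dots> = (fps_inv M oo M) oo ?p" by (rule fps_compose_assoc[OF psi0 M0])
  also have "\<dots> = ?p" by (simp add: fps_inv[OF M0 M1] psi0)
  finally show ?thesis by (simp add: M_def v_def)
qed

lemma S_eq: assumes "is_genus g" shows "S_transform (tau_distr (A_op g)) = genus_Q g"
proof -
  have v0: "vv g $ 0 = 1" by (rule vv0[OF assms])
  have X0: "(fps_X :: complex fps) \<noteq> 0" by simp
  have "psi (vv g) / fps_X = inverse ((1 + fps_X) * vv g)"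
    unfolding psi_def by (rule nonzero_mult_div_cancel_left[OF X0])
  then have "S_transform (tau_distr (A_op g)) = (1 + fps_X) * (inverse (1 + fps_X) * inverse (vv g))"
    by (simp add: S_transform_def main_fps[OF assms] fps_inverse_mult)
  also have "\<dots> = ((1 + fps_X) * inverse (1 + fps_X)) * inverse (vv g)" by (simp add: mult.assoc)
  also have "(1 + fps_X) * inverse (1 + fps_X :: complex fps) = 1" by (rule inverse_mult_eq_1') simp
  finally show ?thesis by (simp add: Q_eq[OF assms])
qed

lemma distinct_distr:
  assumes g: "is_genus g" and h: "is_genus h" and eq: "tau_distr (A_op g) = tau_distr (A_op h)"
  shows "g = h"
proof -
  have "psi (vv g) = psi (vv h)" using main_fps[OF g] main_fps[OF h] eq by simp
  then have "inverse ((1 + fps_X) * vv g) = inverse ((1 + fps_X) * vv h)"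
    unfolding psi_def by simp
  then have "inverse (inverse ((1 + fps_X) * vv g)) = inverse (inverse ((1 + fps_X) * vv h))" by simp
  then have "(1 + fps_X) * vv g = (1 + fps_X) * vv h"
    using vv0[OF g] vv0[OF h] by simp
  then have "vv g = vv h"
  proof -
    have "(1 + fps_X :: complex fps) $ 0 \<noteq> 0" by simp
    then have "(1 + fps_X :: complex fps) \<noteq> 0" by auto
    then show ?thesis using \<open>(1 + fps_X) * vv g = (1 + fps_X) * vv h\<close> by simp
  qed
  then have "fps_inv (genus_log g) = fps_inv (genus_log h)" by (simp add: inv_eq g h)
  then have "genus_log g = genus_log h"
    by (metis fps_inv_idempotent log01 g h one_neq_zero)
  then have "\<And>n. genus_log g $ Suc n = genus_log h $ Suc n" by simp
  then have "\<And>n. g n / of_nat (Suc n) = h n / of_nat (Suc n)" by (simp add: genus_log_def)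
  then show "g = h" by (intro ext) (simp del: of_nat_Suc)
qed

theorem mainTheorem5:
  shows "(\<forall>g. is_genus g \<longrightarrow>
            A_op g \<in> E1 \<and> E_tau (A_op g) \<noteq> 0 \<and>
            S_transform (tau_distr (A_op g)) = genus_Q g)
       \<and> (\<forall>g h. is_genus g \<longrightarrow> is_genus h \<longrightarrow> g \<noteq> h \<longrightarrow>
            A_op g \<noteq> A_op h \<and> tau_distr (A_op g) \<noteq> tau_distr (A_op h))"
proof (intro conjI allI impI)
  fix g assume g: "is_genus g"
  have "{m. \<exists>n. A_op g m n \<noteq> 0} \<subseteq> {0, 1}" by (auto simp: A_eq[OF g] split: if_splits)
  then show "A_op g \<in> E1" unfolding E1_def by (auto intro: finite_subset)
  show "E_tau (A_op g) \<noteq> 0" by (simp add: E_tau_def A_eq[OF g] vv0[OF g])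
  show "S_transform (tau_distr (A_op g)) = genus_Q g" by (rule S_eq[OF g])
next
  fix g h assume g: "is_genus g" and h: "is_genus h" and ne: "g \<noteq> h"
  show "tau_distr (A_op g) \<noteq> tau_distr (A_op h)" using distinct_distr[OF g h] ne by blast
  then show "A_op g \<noteq> A_op h" by auto
qed

end
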